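(* Let $\mathcal{K}$ be a finite index set (the base stations) and let $\mathcal{N}\subseteq\mathcal{K}$ be a nonempty subset (the cooperating base stations). For each $n\in\mathcal{K}$ let $P_n>0$, and assume that the values $P_n$, $n\in\mathcal{N}$, are pairwise distinct. Let $(h_n)_{n\in\mathcal{K}}$ be independent circularly symmetric complex Gaussian random variables with $\mathbb{E}[h_n]=0$ and $\mathbb{E}|h_n|^2=1$, so that $H_n:=|h_n|^2P_n$ are independent exponential random variables with means $P_n$. Let $\sigma_z^2\ge 0$ and define the SINR $$\gamma(\mathcal{N})=\frac{\sum_{n\in\mathcal{N}}|h_n|^2P_n}{\sum_{k\in\mathcal{K}\setminus\mathcal{N}}|h_k|^2P_k+\sigma_z^2}$$ (when $\sigma_z^2=0$ and $\mathcal{K}\setminus\mathcal{N}=\emptyset$ the statement is not considered). Then for every threshold $\gamma_{th}>0$, the outage probability $P^{out}_{\mathcal{N}}(\gamma_{th}):=\mathbb{P}\big(\gamma(\mathcal{N})\le\gamma_{th}\big)$ equals $$P^{out}_{\mathcal{N}}(\gamma_{th})=1-\sum_{n\in\mathcal{N}}\left(e^{-\gamma_{th}\sigma_z^2/P_n}\prod_{j\in\mathcal{N},\,j\neq n}\frac{P_n}{P_n-P_j}\prod_{k\in\mathcal{K}\setminus\mathcal{N}}\frac{P_n}{P_k\gamma_{th}+P_n}\right).$$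
   Context: Model: a mobile receives a joint (coordinated multipoint) downlink transmission from the base stations in $\mathcal{N}$, while base stations in $\mathcal{K}\setminus\mathcal{N}$ act as interferers. $P_n$ is the average received power from base station $n$ (transmit power times path gain), $h_n$ is the Rayleigh fast-fading coefficient, and $\sigma_z^2$ is the thermal noise power. An empty product is equal to $1$. *)

theory Defs
  imports "HOL-Probability.Probability"
begin

text \<open>Density (w.r.t. Lebesgue measure on the complex plane) of a circularly
symmetric complex Gaussian with mean 0 and E|h|^2 = 1, i.e. CN(0,1).\<close>
definition cn01_density :: "complex \<Rightarrow> real" where
  "cn01_density z = exp (- (cmod z)\<^sup>2) / pi"

definition sinr :: "'k set \<Rightarrow> 'k set \<Rightarrow> ('k \<Rightarrow> real) \<Rightarrow> real \<Rightarrow> ('k \<Rightarrow> complex) \<Rightarrow> real" where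
  "sinr K N P s2 h =
     (\<Sum>n\<in>N. (cmod (h n))\<^sup>2 * P n) / ((\<Sum>k\<in>K - N. (cmod (h k))\<^sup>2 * P k) + s2)"

end

theory Submission
  imports Defs
begin

lemma lborel_complex:
  "distr (lborel \<Otimes>\<^sub>M lborel) borel (\<lambda>p. Complex (fst p) (snd p)) = (lborel :: complex measure)"
proof (rule lborel_eqI[symmetric])
  have meas: "(\<lambda>p. Complex (fst p) (snd p)) \<in> borel_measurable (lborel \<Otimes>\<^sub>M lborel)"
  proof -
    have e: "(\<lambda>p. Complex (fst p) (snd p)) = (\<lambda>p::real\<times>real. complex_of_real (fst p) + \<i> * complex_of_real (snd p))"
      by (auto simp: complex_eq_iff)
    show ?thesis unfolding e by measurable
  qed
  fix l u :: complex assume le: "\<And>b. b \<in> Basis \<Longrightarrow> l \<bullet> b \<le> u \<bullet> b"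
  then have le1: "Re l \<le> Re u" and le2: "Im l \<le> Im u"
    using le[of 1] le[of "\<i>"] by (auto simp: Basis_complex_def)
  have pre: "(\<lambda>p. Complex (fst p) (snd p)) -` box l u \<inter> space (lborel \<Otimes>\<^sub>M lborel)
     = {Re l<..<Re u} \<times> {Im l<..<Im u}"
    by (auto simp: box_def Basis_complex_def space_pair_measure)
  show "emeasure (distr (lborel \<Otimes>\<^sub>M lborel) borel (\<lambda>p. Complex (fst p) (snd p))) (box l u) =
      ennreal (\<Prod>b\<in>Basis. (u - l) \<bullet> b)"
    using le1 le2
    by (simp add: emeasure_distr[OF meas] pre lborel.emeasure_pair_measure_Times Basis_complex_def
        ennreal_mult)
qed simp

lemma nn_integral_even:
  fixes g :: "real \<Rightarrow> ennreal"
  assumes [measurable]: "g \<in> borel_measurable borel" and ev: "\<And>x. g (- x) = g x"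
  shows "(\<integral>\<^sup>+x. g x \<partial>lborel) = 2 * (\<integral>\<^sup>+x. g x * indicator {0..} x \<partial>lborel)"
proof -
  have "(\<integral>\<^sup>+x. g x \<partial>lborel) = (\<integral>\<^sup>+x. g x * indicator {0..} x + g x * indicator {..<0} x \<partial>lborel)"
    by (intro nn_integral_cong) (auto split: split_indicator)
  also have "\<dots> = (\<integral>\<^sup>+x. g x * indicator {0..} x \<partial>lborel) + (\<integral>\<^sup>+x. g x * indicator {..<0} x \<partial>lborel)"
    by (rule nn_integral_add) auto
  also have "(\<integral>\<^sup>+x. g x * indicator {..<0} x \<partial>lborel) = (\<integral>\<^sup>+x. g x * indicator {..<0} x \<partial>distr lborel borel uminus)"
    by (simp add: lborel_distr_uminus)
  also have "\<dots> = (\<integral>\<^sup>+x. g (- x) * indicator {..<0} (- x) \<partial>lborel)"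
    by (subst nn_integral_distr) auto
  also have "\<dots> = (\<integral>\<^sup>+x. g x * indicator {0..} x \<partial>lborel)"
    by (intro nn_integral_cong_AE, rule AE_mp[OF AE_lborel_singleton[of 0]])
       (auto simp: ev split: split_indicator)
  finally show ?thesis by (simp add: mult_2)
qed

lemma nn_integral_complex:
  fixes f :: "complex \<Rightarrow> ennreal"
  assumes [measurable]: "f \<in> borel_measurable borel"
  shows "(\<integral>\<^sup>+z. f z \<partial>lborel) = (\<integral>\<^sup>+x. \<integral>\<^sup>+y. f (Complex x y) \<partial>lborel \<partial>lborel)"
proof -
  have meas: "(\<lambda>p. Complex (fst p) (snd p)) \<in> borel_measurable (lborel \<Otimes>\<^sub>M lborel)"
  proof -
    have e: "(\<lambda>p. Complex (fst p) (snd p)) = (\<lambda>p::real\<times>real. complex_of_real (fst p) + \<i> * complex_of_real (snd p))"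
      by (auto simp: complex_eq_iff)
    show ?thesis unfolding e by measurable
  qed
  have "(\<integral>\<^sup>+z. f z \<partial>lborel) = (\<integral>\<^sup>+z. f z \<partial>distr (lborel \<Otimes>\<^sub>M lborel) borel (\<lambda>p. Complex (fst p) (snd p)))"
    by (simp add: lborel_complex)
  also have "\<dots> = (\<integral>\<^sup>+p. f (Complex (fst p) (snd p)) \<partial>(lborel \<Otimes>\<^sub>M lborel))"
    by (rule nn_integral_distr[OF meas]) simp
  also have "\<dots> = (\<integral>\<^sup>+x. \<integral>\<^sup>+y. f (Complex x y) \<partial>lborel \<partial>lborel)"
  proof -
    have m2: "(\<lambda>p. f (Complex (fst p) (snd p))) \<in> borel_measurable (lborel \<Otimes>\<^sub>M lborel)"
      using measurable_comp[OF meas, of f borel] assms by (simp add: comp_def)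
    show ?thesis using lborel.nn_integral_fst[OF m2] by simp
  qed
  finally show ?thesis .
qed

lemma two_ennreal: "2 * ennreal r = ennreal (2 * r)"
  by (simp add: ennreal_mult')

lemma inner_half:
  fixes a c :: real assumes a: "0 \<le> a" and c: "0 < c"
  shows "(\<integral>\<^sup>+x. ennreal \<bar>x\<bar> * (ennreal (exp (- (x\<^sup>2 * c)) / pi) * indicator {a<..} (x\<^sup>2 * c)) \<partial>lborel)
         = ennreal (exp (- a) / (c * pi))"
proof -
  define b where "b = sqrt (a / c)"
  have b0: "0 \<le> b" using a c by (simp add: b_def)
  have bb: "b\<^sup>2 * c = a" using a c by (simp add: b_def)
  have iff: "0 \<le> x \<Longrightarrow> (a < x\<^sup>2 * c) = (b < x)" for x
  proof -
    assume x: "0 \<le> x"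
    have "(a < x\<^sup>2 * c) = (a / c < x\<^sup>2)" using c by (simp add: field_simps)
    also have "\<dots> = (sqrt (a/c) < sqrt (x\<^sup>2))" by (simp only: real_sqrt_less_iff)
    also have "\<dots> = (b < x)" using x by (simp add: b_def abs_of_nonneg)
    finally show ?thesis .
  qed
  have "(\<integral>\<^sup>+x. ennreal \<bar>x\<bar> * (ennreal (exp (- (x\<^sup>2 * c)) / pi) * indicator {a<..} (x\<^sup>2 * c)) \<partial>lborel)
      = 2 * (\<integral>\<^sup>+x. ennreal \<bar>x\<bar> * (ennreal (exp (- (x\<^sup>2 * c)) / pi) * indicator {a<..} (x\<^sup>2 * c)) * indicator {0..} x \<partial>lborel)"
    by (rule nn_integral_even) auto
  also have "(\<integral>\<^sup>+x. ennreal \<bar>x\<bar> * (ennreal (exp (- (x\<^sup>2 * c)) / pi) * indicator {a<..} (x\<^sup>2 * c)) * indicator {0..} x \<partial>lborel)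
      = (\<integral>\<^sup>+x. ennreal (x * exp (- (x\<^sup>2 * c)) / pi) * indicator {b..} x \<partial>lborel)"
  proof (intro nn_integral_cong_AE, rule AE_mp[OF AE_lborel_singleton[of b]], intro AE_I2 impI)
    fix x :: real assume "x \<noteq> b"
    then show "ennreal \<bar>x\<bar> * (ennreal (exp (- (x\<^sup>2 * c)) / pi) * indicator {a<..} (x\<^sup>2 * c)) * indicator {0..} x
        = ennreal (x * exp (- (x\<^sup>2 * c)) / pi) * indicator {b..} x"
      using iff[of x] b0 by (cases "0 \<le> x") (auto split: split_indicator simp: ennreal_mult[symmetric])
  qed
  also have "\<dots> = ennreal (0 - (- exp (- (b\<^sup>2 * c)) / (2 * c * pi)))"
  proof (rule nn_integral_FTC_atLeast)
    show "((\<lambda>x. - exp (- (x\<^sup>2 * c)) / (2 * c * pi)) \<longlongrightarrow> 0) at_top"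
    proof -
      have "((\<lambda>x::real. - exp (- (x\<^sup>2 * c)) / (2 * c * pi)) \<longlongrightarrow> - 0 / (2 * c * pi)) at_top"
        apply (intro tendsto_intros filterlim_compose[OF exp_at_bot] filterlim_compose[OF filterlim_uminus_at_bot_at_top])
        apply (rule filterlim_at_top_mult_tendsto_pos[OF tendsto_const c])
        apply (rule filterlim_pow_at_top) apply simp apply (rule filterlim_ident) using c by auto
      then show ?thesis by simp
    qed
  qed (use c b0 in \<open>auto intro!: derivative_eq_intros simp: field_simps\<close>)
  also have "\<dots> = ennreal (exp (- a) / (2 * c * pi))" by (simp add: bb)
  finally show ?thesis using c
    by (simp add: two_ennreal)
qed

lemma cn01_surv:
  fixes a :: real assumes a: "0 \<le> a"
  shows "(\<integral>\<^sup>+z. ennreal (cn01_density z) * indicator {z. a < (cmod z)\<^sup>2} z \<partial>lborel) = ennreal (exp (- a))"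
proof -
  define G where "G u = ennreal (exp (-u) / pi) * indicator {a<..} u" for u :: real
  have Gm[measurable]: "G \<in> borel_measurable borel" unfolding G_def by measurable
  have "(\<integral>\<^sup>+z. ennreal (cn01_density z) * indicator {z. a < (cmod z)\<^sup>2} z \<partial>lborel)
      = (\<integral>\<^sup>+x. \<integral>\<^sup>+y. G (x\<^sup>2 + y\<^sup>2) \<partial>lborel \<partial>lborel)"
    by (subst nn_integral_complex)
       (auto simp: G_def cn01_density_def complex_norm cmod_def split: split_indicator
          intro!: nn_integral_cong)
  also have "\<dots> = (\<integral>\<^sup>+x. ennreal \<bar>x\<bar> * (\<integral>\<^sup>+s. G (x\<^sup>2 * (1 + s\<^sup>2)) \<partial>lborel) \<partial>lborel)"
  proof (intro nn_integral_cong_AE, rule AE_mp[OF AE_lborel_singleton[of 0]], intro AE_I2 impI)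
    fix x :: real assume x: "x \<noteq> 0"
    have "(\<integral>\<^sup>+y. G (x\<^sup>2 + y\<^sup>2) \<partial>lborel) = ennreal \<bar>x\<bar> * (\<integral>\<^sup>+s. G (x\<^sup>2 + (0 + x * s)\<^sup>2) \<partial>lborel)"
      by (rule nn_integral_real_affine[OF _ x]) simp
    also have "(\<lambda>s. x\<^sup>2 + (0 + x * s)\<^sup>2) = (\<lambda>s. x\<^sup>2 * (1 + s\<^sup>2))"
      by (auto simp: fun_eq_iff algebra_simps power2_eq_square)
    finally show "(\<integral>\<^sup>+y. G (x\<^sup>2 + y\<^sup>2) \<partial>lborel) = ennreal \<bar>x\<bar> * (\<integral>\<^sup>+s. G (x\<^sup>2 * (1 + s\<^sup>2)) \<partial>lborel)"
      by simp
  qed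
  also have "\<dots> = (\<integral>\<^sup>+x. \<integral>\<^sup>+s. ennreal \<bar>x\<bar> * G (x\<^sup>2 * (1 + s\<^sup>2)) \<partial>lborel \<partial>lborel)"
    by (intro nn_integral_cong nn_integral_cmult[symmetric]) simp
  also have "\<dots> = (\<integral>\<^sup>+s. \<integral>\<^sup>+x. ennreal \<bar>x\<bar> * G (x\<^sup>2 * (1 + s\<^sup>2)) \<partial>lborel \<partial>lborel)"
    by (rule lborel_pair.Fubini') simp
  also have "\<dots> = (\<integral>\<^sup>+s. ennreal (exp (- a) / ((1 + s\<^sup>2) * pi)) \<partial>lborel)"
  proof (intro nn_integral_cong)
    fix s :: real
    have c: "0 < 1 + s\<^sup>2" by (simp add: add_pos_nonneg)
    show "(\<integral>\<^sup>+x. ennreal \<bar>x\<bar> * G (x\<^sup>2 * (1 + s\<^sup>2)) \<partial>lborel) = ennreal (exp (- a) / ((1 + s\<^sup>2) * pi))"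
      using inner_half[OF a c] by (simp add: G_def)
  qed
  also have "\<dots> = 2 * (\<integral>\<^sup>+s. ennreal (exp (- a) / ((1 + s\<^sup>2) * pi)) * indicator {0..} s \<partial>lborel)"
    by (rule nn_integral_even) auto
  also have "(\<integral>\<^sup>+s. ennreal (exp (- a) / ((1 + s\<^sup>2) * pi)) * indicator {0..} s \<partial>lborel)
      = ennreal (exp (- a) / pi * (pi / 2) - exp (- a) / pi * arctan 0)"
  proof (rule nn_integral_FTC_atLeast)
    show "((\<lambda>s. exp (- a) / pi * arctan s) \<longlongrightarrow> exp (- a) / pi * (pi / 2)) at_top"
      by (intro tendsto_intros tendsto_arctan_at_top)
  next
    have nz: "pi + pi * s\<^sup>2 \<noteq> 0" for s :: real
      using mult_nonneg_nonneg[of pi "s\<^sup>2", OF _ zero_le_power2] pi_gt_zero by linarith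
    show "\<And>x. 0 \<le> x \<Longrightarrow> ((\<lambda>s. exp (- a) / pi * arctan s) has_real_derivative exp (- a) / ((1 + x\<^sup>2) * pi)) (at x)"
    proof -
      fix x :: real
      have "((\<lambda>s. exp (- a) / pi * arctan s) has_real_derivative exp (- a) / pi * inverse (1 + x\<^sup>2)) (at x)"
        by (auto intro!: derivative_eq_intros)
      moreover have "exp (- a) / pi * inverse (1 + x\<^sup>2) = exp (- a) / ((1 + x\<^sup>2) * pi)"
        by (simp add: divide_inverse mult_ac)
      ultimately show "((\<lambda>s. exp (- a) / pi * arctan s) has_real_derivative exp (- a) / ((1 + x\<^sup>2) * pi)) (at x)"
        by simp
    qed
  qed (auto simp: add_pos_nonneg)
  also have "2 * ennreal (exp (- a) / pi * (pi / 2) - exp (- a) / pi * arctan 0) = ennreal (exp (- a))"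
    by (simp add: two_ennreal)
  finally show ?thesis .
qed

lemma pf_aux:
  fixes p q r D :: real
  assumes "p \<noteq> 0" "q \<noteq> 0" "r \<noteq> 0" "D \<noteq> 0" "r = q - p"
  shows "1/(p*q*D) = 1/(p*r*D) + 1/(q*((-r)*D))"
proof -
  have e: "q*r*D - p*r*D = r*(r*D)"
  proof -
    have "q*r*D - p*r*D = (q-p)*(r*D)" by (simp add: algebra_simps)
    then show ?thesis using assms(5) by simp
  qed
  have "1/(p*r*D) + 1/(q*((-r)*D)) = 1/(p*r*D) - 1/(q*r*D)" by simp
  also have "\<dots> = (q*r*D - p*r*D) / ((p*r*D)*(q*r*D))"
    using assms by (simp add: diff_frac_eq)
  also have "\<dots> = r * (r * D) / ((p*r*D)*(q*r*D))" by (simp only: e)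
  also have "r * (r * D) / ((p*r*D)*(q*r*D)) = 1/(p*q*D)"
    using assms(1-4) by simp
  finally show ?thesis by simp
qed
lemma pf_step:
  fixes z a b D :: real
  assumes "z \<noteq> a" "z \<noteq> b" "a \<noteq> b" "D \<noteq> 0"
  shows "1/((z-a)*(z-b)*D) = 1/((z-a)*(a-b)*D) + 1/((z-b)*((b-a)*D))"
proof -
  have "1/((z-a)*(z-b)*D) = 1/((z-a)*(a-b)*D) + 1/((z-b)*((-(a-b))*D))"
    by (rule pf_aux) (use assms in auto)
  then show ?thesis by (simp only: minus_diff_eq)
qed

lemma pf:
  fixes u :: "'k \<Rightarrow> real"
  assumes "finite N" "N \<noteq> {}" "inj_on u N" "z \<notin> u ` N"
  shows "1 / (\<Prod>j\<in>N. z - u j) = (\<Sum>n\<in>N. 1 / ((z - u n) * (\<Prod>j\<in>N-{n}. u n - u j)))"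
  using assms
proof (induction N arbitrary: z rule: finite_ne_induct)
  case (singleton x)
  then show ?case by simp
next
  case (insert m N)
  have injN: "inj_on u N" using insert.prems by auto
  have um: "u m \<notin> u ` N" using insert.prems insert.hyps by auto
  have zm: "z \<noteq> u m" and zN: "z \<notin> u ` N" using insert.prems by auto
  have D: "(\<Prod>j\<in>N-{n}. u n - u j) \<noteq> 0" if "n \<in> N" for n
    using injN that by (auto simp: prod_zero_iff[OF finite_Diff[OF insert.hyps(1)]] inj_on_def)
  have un: "u n \<noteq> u m" if "n \<in> N" for n using um that by (metis image_eqI)
  have zn: "z \<noteq> u n" if "n \<in> N" for n using zN that by auto
  have IHm: "1 / (\<Prod>j\<in>N. u m - u j) = (\<Sum>n\<in>N. 1 / ((u m - u n) * (\<Prod>j\<in>N-{n}. u n - u j)))"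
    using insert.IH[OF injN um] .
  have IHz: "1 / (\<Prod>j\<in>N. z - u j) = (\<Sum>n\<in>N. 1 / ((z - u n) * (\<Prod>j\<in>N-{n}. u n - u j)))"
    using insert.IH[OF injN zN] .
  have rem: "(\<Prod>j\<in>insert m N - {n}. u n - u j) = (u n - u m) * (\<Prod>j\<in>N-{n}. u n - u j)" if "n \<in> N" for n
  proof -
    have "insert m N - {n} = insert m (N - {n})" using that insert.hyps by auto
    then show ?thesis using insert.hyps by (simp add: prod.insert)
  qed
  have "1 / (\<Prod>j\<in>insert m N. z - u j) = 1 / (z - u m) * (1 / (\<Prod>j\<in>N. z - u j))"
    using insert.hyps by simp
  also have "\<dots> = (\<Sum>n\<in>N. 1 / ((z - u m) * (z - u n) * (\<Prod>j\<in>N-{n}. u n - u j)))"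
    unfolding IHz sum_distrib_left by (intro sum.cong) (auto simp: mult_ac)
  also have "\<dots> = (\<Sum>n\<in>N. 1 / ((z - u m) * (u m - u n) * (\<Prod>j\<in>N-{n}. u n - u j))
                  + 1 / ((z - u n) * ((u n - u m) * (\<Prod>j\<in>N-{n}. u n - u j))))"
  proof (intro sum.cong refl)
    fix n assume n: "n \<in> N"
    have a: "z - u m \<noteq> 0" "z - u n \<noteq> 0" "u m - u n \<noteq> 0" "u n - u m \<noteq> 0"
      using zm zn[OF n] un[OF n] by auto
    show "1 / ((z - u m) * (z - u n) * (\<Prod>j\<in>N-{n}. u n - u j)) =
      1 / ((z - u m) * (u m - u n) * (\<Prod>j\<in>N-{n}. u n - u j)) + 1 / ((z - u n) * ((u n - u m) * (\<Prod>j\<in>N-{n}. u n - u j)))"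
      using pf_step[of z "u m" "u n" "\<Prod>j\<in>N-{n}. u n - u j"] zm zn[OF n] un[OF n] D[OF n] by (simp add: mult_ac)
  qed
  also have "\<dots> = 1 / (z - u m) * (1 / (\<Prod>j\<in>N. u m - u j))
                  + (\<Sum>n\<in>N. 1 / ((z - u n) * (\<Prod>j\<in>insert m N-{n}. u n - u j)))"
    unfolding IHm sum.distrib sum_distrib_left by (intro arg_cong2[where f="(+)"] sum.cong) (auto simp: rem mult_ac)
  also have "\<dots> = (\<Sum>n\<in>insert m N. 1 / ((z - u n) * (\<Prod>j\<in>insert m N-{n}. u n - u j)))"
    using insert.hyps by (simp add: sum.insert)
  finally show ?case .
qed

lemma coef_sum:
  fixes P :: "'k \<Rightarrow> real"
  assumes "finite N" "N \<noteq> {}" "inj_on P N" "\<And>n. n \<in> N \<Longrightarrow> P n > 0"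
  shows "(\<Sum>n\<in>N. \<Prod>j\<in>N-{n}. P n / (P n - P j)) = 1"
proof -
  define u where "u j = 1 / P j" for j
  have inju: "inj_on u N" using assms(3,4) by (auto simp: inj_on_def u_def)
  have upos: "n \<in> N \<Longrightarrow> u n > 0" for n using assms(4) by (simp add: u_def)
  have z: "0 \<notin> u ` N" using upos by force
  have nz: "(\<Prod>j\<in>N. 0 - u j) \<noteq> 0" using upos assms(1) by (force simp: prod_zero_iff)
  have "1 = (\<Prod>j\<in>N. 0 - u j) * (1 / (\<Prod>j\<in>N. 0 - u j))" using nz by simp
  also have "\<dots> = (\<Sum>n\<in>N. (\<Prod>j\<in>N. 0 - u j) * (1 / ((0 - u n) * (\<Prod>j\<in>N-{n}. u n - u j))))"
    unfolding pf[OF assms(1,2) inju z] sum_distrib_left ..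
  also have "\<dots> = (\<Sum>n\<in>N. \<Prod>j\<in>N-{n}. P n / (P n - P j))"
  proof (intro sum.cong refl)
    fix n assume n: "n \<in> N"
    have D: "(\<Prod>j\<in>N-{n}. u n - u j) \<noteq> 0"
      using inju n by (auto simp: prod_zero_iff[OF finite_Diff[OF assms(1)]] inj_on_def)
    have "(\<Prod>j\<in>N. 0 - u j) = (0 - u n) * (\<Prod>j\<in>N-{n}. 0 - u j)"
      using n assms(1) by (simp add: prod.remove)
    then have "(\<Prod>j\<in>N. 0 - u j) * (1 / ((0 - u n) * (\<Prod>j\<in>N-{n}. u n - u j)))
        = (\<Prod>j\<in>N-{n}. 0 - u j) / (\<Prod>j\<in>N-{n}. u n - u j)"
      using upos[OF n] D by simp
    also have "\<dots> = (\<Prod>j\<in>N-{n}. (0 - u j) / (u n - u j))"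
      by (rule prod_dividef[symmetric])
    also have "\<dots> = (\<Prod>j\<in>N-{n}. P n / (P n - P j))"
    proof (intro prod.cong refl)
      fix j assume j: "j \<in> N - {n}"
      have "P j > 0" "P n > 0" "P n \<noteq> P j" using j n assms(3,4) by (auto simp: inj_on_def)
      then show "(0 - u j) / (u n - u j) = P n / (P n - P j)"
        by (simp add: u_def field_simps)
    qed
    finally show "(\<Prod>j\<in>N. 0 - u j) * (1 / ((0 - u n) * (\<Prod>j\<in>N-{n}. u n - u j))) = (\<Prod>j\<in>N-{n}. P n / (P n - P j))" .
  qed
  finally show ?thesis by simp
qed

definition Exd :: "real measure" where
  "Exd = density lborel (\<lambda>x. ennreal (exponential_density 1 x))"

definition coef :: "'k set \<Rightarrow> ('k \<Rightarrow> real) \<Rightarrow> 'k \<Rightarrow> real" where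
  "coef N P n = (\<Prod>j\<in>N-{n}. P n / (P n - P j))"

definition Fs :: "'k set \<Rightarrow> ('k \<Rightarrow> real) \<Rightarrow> real \<Rightarrow> real" where
  "Fs N P t = (if t < 0 then 1 else (\<Sum>n\<in>N. coef N P n * exp (- t / P n)))"

lemma prob_space_Exd: "prob_space Exd"
  unfolding Exd_def by (rule prob_space_exponential_density) simp

lemma space_Exd[simp]: "space Exd = UNIV" by (simp add: Exd_def)
lemma sets_Exd[simp, measurable_cong]: "sets Exd = sets borel" by (simp add: Exd_def)

lemma PS: "product_prob_space (\<lambda>_::'k. Exd)"
  using prob_space_Exd
  by (simp add: product_prob_space_def product_prob_space_axioms_def product_sigma_finite_def
      prob_space_imp_sigma_finite)

lemma exp_int:
  fixes b T :: real
  assumes "b \<noteq> 0" "0 \<le> T"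
  shows "((\<lambda>y. exp (- b * y)) has_integral (1 - exp (- b * T)) / b) {0..T}"
proof -
  have "((\<lambda>y. exp (- b * y)) has_integral ((- exp (- b * T) / b) - (- exp (- b * 0) / b))) {0..T}"
  proof (rule fundamental_theorem_of_calculus[OF assms(2)])
    fix x :: real
    have "((\<lambda>y. - exp (- b * y) / b) has_real_derivative exp (- b * x)) (at x)"
      using assms(1) by (auto intro!: derivative_eq_intros simp: field_simps)
    then show "((\<lambda>y. - exp (- b * y) / b) has_vector_derivative exp (- b * x)) (at x within {0..T})"
      by (simp add: has_real_derivative_iff_has_vector_derivative[symmetric] has_field_derivative_at_within)
  qed
  then show ?thesis by (simp add: diff_divide_distrib)
qed

lemma Fs_meas[measurable]: "(\<lambda>y. Fs N P (f y)) \<in> borel_measurable borel" if [measurable]: "f \<in> borel_measurable borel"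
  unfolding Fs_def by measurable

lemma coef_insert_m:
  assumes "m \<notin> N" shows "coef (insert m N) P m = (\<Prod>j\<in>N. P m / (P m - P j))"
  using assms by (simp add: coef_def)

lemma coef_insert_n:
  assumes "finite N" "m \<notin> N" "n \<in> N"
  shows "coef (insert m N) P n = coef N P n * (P n / (P n - P m))"
proof -
  have "insert m N - {n} = insert m (N - {n})" using assms by auto
  then show ?thesis using assms by (simp add: coef_def prod.insert mult_ac)
qed

lemma Fs_nonneg_integral:
  fixes N :: "'k set" and P :: "'k \<Rightarrow> real"
  assumes "finite N" "m \<notin> N" "inj_on P (insert m N)" "\<And>n. n \<in> insert m N \<Longrightarrow> P n > 0"
    and t: "0 \<le> t"
  defines "T \<equiv> t / P m"
  defines "I \<equiv> (\<Sum>n\<in>N. coef N P n * exp (- t / P n) * ((1 - exp (- ((P n - P m) / P n) * T)) / ((P n - P m) / P n)))"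
  shows "((\<lambda>y. exp (- y) * Fs N P (t - P m * y)) has_integral I) {0..T}"
    and "I + exp (- T) = Fs (insert m N) P t"
proof -
  have Pm: "P m > 0" using assms(4) by auto
  have T0: "0 \<le> T" using t Pm by (simp add: T_def)
  have Pn: "n \<in> N \<Longrightarrow> P n > 0" for n using assms(4) by auto
  have Pnm: "n \<in> N \<Longrightarrow> P n \<noteq> P m" for n using assms(2,3) by (auto simp: inj_on_def)
  have b: "n \<in> N \<Longrightarrow> (P n - P m) / P n \<noteq> 0" for n using Pn[of n] Pnm[of n] by auto
  have "((\<lambda>y. \<Sum>n\<in>N. coef N P n * exp (- t / P n) * exp (- ((P n - P m) / P n) * y)) has_integral I) {0..T}"
    unfolding I_def
    by (intro has_integral_sum assms(1) has_integral_mult_right exp_int b T0)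
  then show "((\<lambda>y. exp (- y) * Fs N P (t - P m * y)) has_integral I) {0..T}"
  proof (rule has_integral_eq[rotated])
    fix y assume y: "y \<in> {0..T}"
    then have "P m * y \<le> t" using Pm by (auto simp: T_def field_simps)
    then have "\<not> (t - P m * y < 0)" by simp
    then have "exp (- y) * Fs N P (t - P m * y) = (\<Sum>n\<in>N. coef N P n * (exp (- y) * exp (- (t - P m * y) / P n)))"
      by (simp add: Fs_def sum_distrib_left mult_ac)
    also have "\<dots> = (\<Sum>n\<in>N. coef N P n * exp (- t / P n) * exp (- ((P n - P m) / P n) * y))"
    proof (intro sum.cong refl)
      fix n assume n: "n \<in> N"
      have "- y + (- (t - P m * y) / P n) = - t / P n + (- ((P n - P m) / P n) * y)"
        using Pn[OF n] by (simp add: field_simps)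
      then show "coef N P n * (exp (- y) * exp (- (t - P m * y) / P n)) = coef N P n * exp (- t / P n) * exp (- ((P n - P m) / P n) * y)"
        by (simp add: exp_add[symmetric] mult_ac)
    qed
    finally show "(\<Sum>n\<in>N. coef N P n * exp (- t / P n) * exp (- ((P n - P m) / P n) * y)) = exp (- y) * Fs N P (t - P m * y)"
      by simp
  qed
  have tm: "coef N P n * exp (- t / P n) * ((1 - exp (- ((P n - P m) / P n) * T)) / ((P n - P m) / P n))
      = coef (insert m N) P n * (exp (- t / P n) - exp (- t / P m))" if n: "n \<in> N" for n
  proof -
    have "- t / P n + (- ((P n - P m) / P n) * T) = - t / P m"
      using Pn[OF n] Pm by (simp add: T_def field_simps)
    then have e: "exp (- t / P n) * exp (- ((P n - P m) / P n) * T) = exp (- t / P m)"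
      by (simp add: exp_add[symmetric])
    have "coef N P n * exp (- t / P n) * ((1 - exp (- ((P n - P m) / P n) * T)) / ((P n - P m) / P n))
        = coef N P n * (P n / (P n - P m)) * (exp (- t / P n) - exp (- t / P n) * exp (- ((P n - P m) / P n) * T))"
      using Pn[OF n] Pnm[OF n] by (simp add: field_simps)
    also have "\<dots> = coef (insert m N) P n * (exp (- t / P n) - exp (- t / P m))"
      using e coef_insert_n[OF assms(1,2) n] by simp
    finally show ?thesis .
  qed
  have cs: "coef (insert m N) P m + (\<Sum>n\<in>N. coef (insert m N) P n) = 1"
    using coef_sum[of "insert m N" P] assms(1-4) by (simp add: coef_def sum.insert)
  have "I = (\<Sum>n\<in>N. coef (insert m N) P n * (exp (- t / P n) - exp (- t / P m)))"
    unfolding I_def by (rule sum.cong[OF refl tm])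
  also have "\<dots> = (\<Sum>n\<in>N. coef (insert m N) P n * exp (- t / P n)) - (\<Sum>n\<in>N. coef (insert m N) P n) * exp (- t / P m)"
    by (simp only: right_diff_distrib sum_subtractf sum_distrib_right)
  also have "\<dots> = (\<Sum>n\<in>N. coef (insert m N) P n * exp (- t / P n)) - (1 - coef (insert m N) P m) * exp (- t / P m)"
  proof -
    have "(\<Sum>n\<in>N. coef (insert m N) P n) = 1 - coef (insert m N) P m" using cs by simp
    then show ?thesis by (simp only:)
  qed
  finally show "I + exp (- T) = Fs (insert m N) P t"
    using t assms(1,2) by (simp add: Fs_def T_def sum.insert algebra_simps)
qed

lemma sum_comp_meas[measurable]:
  fixes P :: "'k \<Rightarrow> real"
  assumes "N \<subseteq> I"
  shows "(\<lambda>x. \<Sum>n\<in>N. P n * x n) \<in> borel_measurable (PiM I (\<lambda>_. Exd))"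
proof (rule borel_measurable_sum)
  fix n assume "n \<in> N"
  then have "n \<in> I" using assms by auto
  then have "(\<lambda>x. x n) \<in> measurable (PiM I (\<lambda>_. Exd)) Exd" by (rule measurable_component_singleton)
  then have "(\<lambda>x. x n) \<in> borel_measurable (PiM I (\<lambda>_. Exd))"
    by (simp add: measurable_cong_sets[OF refl sets_Exd])
  then show "(\<lambda>x. P n * x n) \<in> borel_measurable (PiM I (\<lambda>_. Exd))"
    by measurable
qed

lemma hypo:
  fixes N :: "'k set" and P :: "'k \<Rightarrow> real"
  assumes "finite N" "inj_on P N" "\<And>n. n \<in> N \<Longrightarrow> P n > 0"
  shows "0 \<le> Fs N P t \<and> emeasure (PiM N (\<lambda>_. Exd)) {x \<in> space (PiM N (\<lambda>_. Exd)). t < (\<Sum>n\<in>N. P n * x n)}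
           = ennreal (Fs N P t)"
  using assms
proof (induction N arbitrary: t rule: finite_induct)
  case empty
  then show ?case by (cases "t < 0") (auto simp: Fs_def space_PiM_empty)
next
  case (insert m N t)
  interpret product_prob_space "\<lambda>_::'k. Exd" by (rule PS)
  interpret E: prob_space Exd by (rule prob_space_Exd)
  have injN: "inj_on P N" using insert.prems by auto
  have PN: "\<And>n. n \<in> N \<Longrightarrow> P n > 0" using insert.prems by auto
  have Pm: "P m > 0" using insert.prems by auto
  note IH = insert.IH[OF injN PN]
  let ?S = "\<lambda>x. \<Sum>n\<in>N. P n * x n"
  define A where "A = {x \<in> space (PiM (insert m N) (\<lambda>_. Exd)). t < (\<Sum>n\<in>insert m N. P n * x n)}"
  have Ameas[measurable]: "A \<in> sets (PiM (insert m N) (\<lambda>_. Exd))"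
    unfolding A_def by measurable
  have "emeasure (PiM (insert m N) (\<lambda>_. Exd)) A = (\<integral>\<^sup>+x. indicator A x \<partial>PiM (insert m N) (\<lambda>_. Exd))"
    by simp
  also have "\<dots> = (\<integral>\<^sup>+y. \<integral>\<^sup>+x. indicator A (x(m := y)) \<partial>PiM N (\<lambda>_. Exd) \<partial>Exd)"
    by (rule product_nn_integral_insert_rev) (use insert.hyps in auto)
  also have "\<dots> = (\<integral>\<^sup>+y. ennreal (Fs N P (t - P m * y)) \<partial>Exd)"
  proof (rule nn_integral_cong)
    fix y :: real
    have "(\<integral>\<^sup>+x. indicator A (x(m := y)) \<partial>PiM N (\<lambda>_. Exd))
        = (\<integral>\<^sup>+x. indicator {x \<in> space (PiM N (\<lambda>_. Exd)). t - P m * y < ?S x} x \<partial>PiM N (\<lambda>_. Exd))"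
    proof (rule nn_integral_cong)
      fix x assume x: "x \<in> space (PiM N (\<lambda>_. Exd))"
      then have sp: "x(m := y) \<in> space (PiM (insert m N) (\<lambda>_. Exd))"
        using insert.hyps by (auto simp: space_PiM PiE_def extensional_def)
      have "(\<Sum>n\<in>insert m N. P n * (x(m := y)) n) = P m * y + ?S x"
        using insert.hyps by (auto simp: sum.insert intro!: sum.cong)
      then show "indicator A (x(m := y)) = indicator {x \<in> space (PiM N (\<lambda>_. Exd)). t - P m * y < ?S x} x"
        using sp x by (auto simp: A_def split: split_indicator)
    qed
    also have "\<dots> = ennreal (Fs N P (t - P m * y))"
      using IH[of "t - P m * y"] by simp
    finally show "(\<integral>\<^sup>+x. indicator A (x(m := y)) \<partial>PiM N (\<lambda>_. Exd)) = ennreal (Fs N P (t - P m * y))" .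
  qed
  also have "\<dots> = (\<integral>\<^sup>+y. ennreal (exponential_density 1 y) * ennreal (Fs N P (t - P m * y)) \<partial>lborel)"
    unfolding Exd_def by (subst nn_integral_density) auto
  finally have eqA: "emeasure (PiM (insert m N) (\<lambda>_. Exd)) A = (\<integral>\<^sup>+y. ennreal (exponential_density 1 y) * ennreal (Fs N P (t - P m * y)) \<partial>lborel)" .
  show ?case
  proof (cases "t < 0")
    case True
    have "(\<integral>\<^sup>+y. ennreal (exponential_density 1 y) * ennreal (Fs N P (t - P m * y)) \<partial>lborel)
        = (\<integral>\<^sup>+y. ennreal (exponential_density 1 y) * 1 \<partial>lborel)"
    proof (rule nn_integral_cong)
      fix y :: real
      show "ennreal (exponential_density 1 y) * ennreal (Fs N P (t - P m * y)) = ennreal (exponential_density 1 y) * 1"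
      proof (cases "y < 0")
        case False
        then have "t - P m * y < 0" using True Pm by (smt (verit) mult_nonneg_nonneg)
        then show ?thesis by (simp add: Fs_def)
      qed (simp add: exponential_density_def)
    qed
    also have "\<dots> = (\<integral>\<^sup>+y. 1 \<partial>Exd)"
      unfolding Exd_def by (subst nn_integral_density) auto
    also have "\<dots> = 1" using prob_space.emeasure_space_1[OF prob_space_Exd] by simp
    finally show ?thesis using True eqA by (simp add: A_def Fs_def)
  next
    case False
    then have t: "0 \<le> t" by simp
    define T where "T = t / P m"
    define I where "I = (\<Sum>n\<in>N. coef N P n * exp (- t / P n) * ((1 - exp (- ((P n - P m) / P n) * T)) / ((P n - P m) / P n)))"
    have hi: "((\<lambda>y. exp (- y) * Fs N P (t - P m * y)) has_integral I) {0..T}"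
      and IF: "I + exp (- T) = Fs (insert m N) P t"
      using Fs_nonneg_integral[OF insert.hyps(1,2) insert.prems t] unfolding T_def I_def by auto
    have nn: "0 \<le> exp (- y) * Fs N P (t - P m * y)" for y using IH by simp
    have I0: "0 \<le> I" using has_integral_nonneg[OF hi] nn by auto
    have "(\<integral>\<^sup>+y. ennreal (exponential_density 1 y) * ennreal (Fs N P (t - P m * y)) \<partial>lborel)
       = (\<integral>\<^sup>+y. ennreal (exp (- y) * Fs N P (t - P m * y)) * indicator {0..T} y
              + ennreal (exp (- y)) * indicator {T<..} y \<partial>lborel)"
    proof (rule nn_integral_cong)
      fix y :: real
      show "ennreal (exponential_density 1 y) * ennreal (Fs N P (t - P m * y)) =
          ennreal (exp (- y) * Fs N P (t - P m * y)) * indicator {0..T} y + ennreal (exp (- y)) * indicator {T<..} y"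
      proof (cases "y < 0")
        case True
        have "0 \<le> T" using t Pm by (simp add: T_def)
        then have "y \<notin> {0..T}" "y \<notin> {T<..}" using True by auto
        then show ?thesis using True by (simp add: exponential_density_def)
      next
        case False
        show ?thesis
        proof (cases "y \<le> T")
          case True
          then show ?thesis using False IH[of "t - P m * y"]
            by (simp add: exponential_density_def ennreal_mult[symmetric])
        next
          case nT: False
          then have "t - P m * y < 0" using Pm by (auto simp: T_def field_simps)
          then show ?thesis using False nT by (simp add: exponential_density_def Fs_def)
        qed
      qed
    qed
    also have "\<dots> = (\<integral>\<^sup>+y. ennreal (exp (- y) * Fs N P (t - P m * y)) * indicator {0..T} y \<partial>lborel)
              + (\<integral>\<^sup>+y. ennreal (exp (- y)) * indicator {T<..} y \<partial>lborel)"
      by (rule nn_integral_add) auto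
    also have "(\<integral>\<^sup>+y. ennreal (exp (- y) * Fs N P (t - P m * y)) * indicator {0..T} y \<partial>lborel) = ennreal I"
      by (rule nn_integral_has_integral_lebesgue'[OF _ hi]) (use nn in auto)
    also have "(\<integral>\<^sup>+y. ennreal (exp (- y)) * indicator {T<..} y \<partial>lborel)
             = (\<integral>\<^sup>+y. ennreal (exp (- y)) * indicator {T..} y \<partial>lborel)"
      by (intro nn_integral_cong_AE, rule AE_mp[OF AE_lborel_singleton[of T]])
         (auto split: split_indicator)
    also have "\<dots> = ennreal (0 - (- exp (- T)))"
    proof (rule nn_integral_FTC_atLeast)
      show "((\<lambda>y::real. - exp (- y)) \<longlongrightarrow> 0) at_top"
      proof -
        have "((\<lambda>y::real. - exp (- y)) \<longlongrightarrow> - 0) at_top"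
          by (intro tendsto_intros filterlim_compose[OF exp_at_bot] filterlim_uminus_at_bot_at_top)
        then show ?thesis by simp
      qed
    qed (auto intro!: derivative_eq_intros)
    also have "ennreal I + ennreal (0 - (- exp (- T))) = ennreal (Fs (insert m N) P t)"
      using I0 IF by (simp add: ennreal_plus[symmetric])
    finally have "emeasure (PiM (insert m N) (\<lambda>_. Exd)) A = ennreal (Fs (insert m N) P t)"
      using eqA by simp
    moreover have "0 \<le> Fs (insert m N) P t" using IF I0 by (metis add_nonneg_nonneg exp_ge_zero)
    ultimately show ?thesis by (simp add: A_def)
  qed
qed

lemma comp_meas:
  assumes "k \<in> I"
  shows "(\<lambda>x. x k) \<in> borel_measurable (PiM I (\<lambda>_. Exd))"
proof -
  have "(\<lambda>x. x k) \<in> measurable (PiM I (\<lambda>_. Exd)) Exd" using assms by (rule measurable_component_singleton)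
  then show ?thesis by (simp add: measurable_cong_sets[OF refl sets_Exd])
qed

lemma lap:
  fixes a :: real assumes a: "0 \<le> a"
  shows "integrable Exd (\<lambda>y. exp (- a * max 0 y))" and "(\<integral>y. exp (- a * max 0 y) \<partial>Exd) = 1 / (1 + a)"
proof -
  interpret E: prob_space Exd by (rule prob_space_Exd)
  have m: "(\<lambda>y. exp (- a * max 0 y)) \<in> borel_measurable Exd"
    by (simp add: measurable_cong_sets[OF refl sets_Exd])
  show int: "integrable Exd (\<lambda>y. exp (- a * max 0 y))"
  proof (rule E.integrable_const_bound[OF _ m])
    show "AE x in Exd. norm (exp (- a * max 0 x)) \<le> 1"
      using a by (auto intro!: AE_I2 simp: mult_nonneg_nonneg)
  qed
  have a1: "0 < 1 + a" using a by simp
  have "(\<integral>\<^sup>+y. ennreal (exp (- a * max 0 y)) \<partial>Exd)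
      = (\<integral>\<^sup>+y. ennreal (exponential_density 1 y) * ennreal (exp (- a * max 0 y)) \<partial>lborel)"
    unfolding Exd_def by (subst nn_integral_density) auto
  also have "\<dots> = (\<integral>\<^sup>+y. ennreal (exp (- (1 + a) * y)) * indicator {0..} y \<partial>lborel)"
    by (intro nn_integral_cong)
       (auto simp: exponential_density_def ennreal_mult[symmetric] mult_exp_exp algebra_simps split: split_indicator)
  also have "\<dots> = ennreal (0 - (- exp (- ((1 + a) * 0)) / (1 + a)))"
  proof (rule nn_integral_FTC_atLeast)
    show "((\<lambda>y::real. - exp (- ((1 + a) * y)) / (1 + a)) \<longlongrightarrow> 0) at_top"
    proof -
      have "((\<lambda>y::real. - exp (- ((1 + a) * y)) / (1 + a)) \<longlongrightarrow> - 0 / (1 + a)) at_top"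
        apply (intro tendsto_intros filterlim_compose[OF exp_at_bot])
        apply (rule filterlim_compose[OF filterlim_uminus_at_bot_at_top])
        apply (rule filterlim_tendsto_pos_mult_at_top[OF tendsto_const a1 filterlim_ident])
        using a1 apply simp
        done
      then show ?thesis by simp
    qed
  next
    have h: "- (exp (- ((1 + a) * y)) * (- 1 - a) / (1 + a)) = exp ((- 1 - a) * y)" for y :: real
    proof -
      have e: "(- 1 - a) * y = - ((1 + a) * y)" by (simp add: algebra_simps)
      have m: "- 1 - a = - (1 + a)" by simp
      have "- (exp (- ((1 + a) * y)) * (- 1 - a) / (1 + a)) = exp (- ((1 + a) * y)) * ((1 + a) / (1 + a))"
        unfolding m by (simp only: mult_minus_right minus_divide_left minus_minus times_divide_eq_right)
      also have "\<dots> = exp (- ((1 + a) * y))" using a1 by simp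
      finally show ?thesis by (simp only: e)
    qed
    show "\<And>x. 0 \<le> x \<Longrightarrow> ((\<lambda>y. - exp (- ((1 + a) * y)) / (1 + a)) has_real_derivative exp (- (1 + a) * x)) (at x)"
      using a1 by (auto intro!: derivative_eq_intros simp: h)
  qed (use a1 in auto)
  finally have "(\<integral>\<^sup>+y. ennreal (exp (- a * max 0 y)) \<partial>Exd) = ennreal (1 / (1 + a))" by simp
  moreover have "(\<integral>\<^sup>+y. ennreal (exp (- a * max 0 y)) \<partial>Exd) = ennreal (\<integral>y. exp (- a * max 0 y) \<partial>Exd)"
    by (rule nn_integral_eq_integral[OF int]) simp
  ultimately show "(\<integral>y. exp (- a * max 0 y) \<partial>Exd) = 1 / (1 + a)"
    using a1 by (simp add: integral_nonneg_AE)
qed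

lemma AE_nonneg_Exd: "AE y in Exd. 0 \<le> y"
  unfolding Exd_def
  by (subst AE_density) (auto simp: exponential_density_def intro!: AE_I2)

lemma final_Q:
  fixes K N :: "'k set" and P :: "'k \<Rightarrow> real" and s2 gth :: real
  assumes K: "finite K" and NK: "N \<subseteq> K" and inj: "inj_on P N"
    and Ppos: "\<And>n. n \<in> K \<Longrightarrow> P n > 0" and s2: "0 \<le> s2" and g: "0 < gth"
  shows "emeasure (PiM K (\<lambda>_. Exd)) {y \<in> space (PiM K (\<lambda>_. Exd)).
            gth * ((\<Sum>k\<in>K-N. P k * y k) + s2) < (\<Sum>n\<in>N. P n * y n)}
     = ennreal (\<Sum>n\<in>N. exp (- gth * s2 / P n) * coef N P n * (\<Prod>k\<in>K-N. P n / (P k * gth + P n)))"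
    and "0 \<le> (\<Sum>n\<in>N. exp (- gth * s2 / P n) * coef N P n * (\<Prod>k\<in>K-N. P n / (P k * gth + P n)))"
proof -
  define I where "I = K - N"
  interpret product_prob_space "\<lambda>_::'k. Exd" I by (rule PS)
  have KU: "K = I \<union> N" using NK by (auto simp: I_def)
  have finI: "finite I" and finN: "finite N" and IN: "I \<inter> N = {}"
    using K NK by (auto simp: I_def intro: finite_subset)
  define c where "c x = gth * ((\<Sum>k\<in>I. P k * x k) + s2)" for x :: "'k \<Rightarrow> real"
  define S where "S y = (\<Sum>n\<in>N. P n * y n)" for y :: "'k \<Rightarrow> real"
  define A where "A = {y \<in> space (PiM K (\<lambda>_. Exd)). c y < S y}"
  have cm[measurable]: "c \<in> borel_measurable (PiM K (\<lambda>_. Exd))"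
    unfolding c_def using sum_comp_meas[of I K P] by (auto simp: I_def)
  have Sm[measurable]: "S \<in> borel_measurable (PiM K (\<lambda>_. Exd))"
    unfolding S_def using sum_comp_meas[of N K P] NK by auto
  have Am: "A \<in> sets (PiM (I \<union> N) (\<lambda>_. Exd))"
    unfolding A_def KU[symmetric] by measurable
  have PN: "\<And>n. n \<in> N \<Longrightarrow> P n > 0" using Ppos NK by auto
  have PI: "\<And>k. k \<in> I \<Longrightarrow> P k > 0" using Ppos by (auto simp: I_def)
  define G where "G x = (\<Sum>n\<in>N. (coef N P n * exp (- gth * s2 / P n)) *
          (\<Prod>k\<in>I. exp (- (gth * P k / P n) * max 0 (x k))))" for x :: "'k \<Rightarrow> real"
  have lapn: "n \<in> N \<Longrightarrow> k \<in> I \<Longrightarrow> 0 \<le> gth * P k / P n" for n k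
    using PN[of n] PI[of k] g by simp
  have intprod: "integrable (PiM I (\<lambda>_. Exd)) (\<lambda>x. \<Prod>k\<in>I. exp (- (gth * P k / P n) * max 0 (x k)))"
    if n: "n \<in> N" for n
  proof -
    have "integrable (PiM I (\<lambda>_. Exd)) (\<lambda>x. \<Prod>k\<in>I. (\<lambda>k y. exp (- (gth * P k / P n) * max 0 y)) k (x k))"
      by (rule product_integrable_prod[OF finI]) (rule lap(1)[OF lapn[OF n]])
    then show ?thesis by simp
  qed
  have intG: "integrable (PiM I (\<lambda>_. Exd)) G"
    unfolding G_def
    using intprod by auto
  have AEnn: "AE x in PiM I (\<lambda>_. Exd). \<forall>k\<in>I. 0 \<le> x k"
  proof (rule eventually_ball_finite[OF finI], rule ballI)
    fix k assume k: "k \<in> I"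
    show "AE x in PiM I (\<lambda>_. Exd). 0 \<le> x k"
      using AE_component[of k "\<lambda>y. 0 \<le> y"] k AE_nonneg_Exd by simp
  qed
  have AEG: "AE x in PiM I (\<lambda>_. Exd). Fs N P (c x) = G x"
    using AEnn
  proof (rule AE_mp, intro AE_I2 impI)
    fix x :: "'k \<Rightarrow> real" assume nn: "\<forall>k\<in>I. 0 \<le> x k"
    have c0: "0 \<le> c x" unfolding c_def using g s2 nn PI
      by (intro mult_nonneg_nonneg add_nonneg_nonneg sum_nonneg) (auto simp: less_imp_le)
    have pern: "coef N P n * exp (- c x / P n) = coef N P n * exp (- gth * s2 / P n) *
        (\<Prod>k\<in>I. exp (- (gth * P k / P n) * max 0 (x k)))" if n: "n \<in> N" for n
    proof -
      have "- c x / P n = - gth * s2 / P n + (\<Sum>k\<in>I. - (gth * P k / P n) * max 0 (x k))"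
        using nn PN[OF n] by (simp add: c_def field_simps sum_divide_distrib sum_distrib_left
            sum_negf[symmetric] max_def)
      then have "exp (- c x / P n) = exp (- gth * s2 / P n) * exp (\<Sum>k\<in>I. - (gth * P k / P n) * max 0 (x k))"
        by (simp only: exp_add)
      also have "exp (\<Sum>k\<in>I. - (gth * P k / P n) * max 0 (x k)) = (\<Prod>k\<in>I. exp (- (gth * P k / P n) * max 0 (x k)))"
        by (rule exp_sum[OF finI])
      finally have "exp (- c x / P n) = exp (- gth * s2 / P n) * (\<Prod>k\<in>I. exp (- (gth * P k / P n) * max 0 (x k)))" .
      then show ?thesis by simp
    qed
    have "Fs N P (c x) = (\<Sum>n\<in>N. coef N P n * exp (- c x / P n))"
      using c0 by (simp add: Fs_def)
    also have "\<dots> = G x" unfolding G_def by (rule sum.cong[OF refl pern])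
    finally show "Fs N P (c x) = G x" .
  qed
  have G0AE: "AE x in PiM I (\<lambda>_. Exd). 0 \<le> G x"
    using AEG
  proof (rule AE_mp, intro AE_I2 impI)
    fix x assume "Fs N P (c x) = G x"
    then show "0 \<le> G x" using hypo[OF finN inj PN, of "c x"] by simp
  qed
  have "emeasure (PiM K (\<lambda>_. Exd)) A = (\<integral>\<^sup>+x. indicator A x \<partial>PiM (I \<union> N) (\<lambda>_. Exd))"
    using Am KU by simp
  also have "\<dots> = (\<integral>\<^sup>+x. \<integral>\<^sup>+y. indicator A (merge I N (x, y)) \<partial>PiM N (\<lambda>_. Exd) \<partial>PiM I (\<lambda>_. Exd))"
    by (rule product_nn_integral_fold[OF IN finI finN]) (use Am in simp)
  also have "\<dots> = (\<integral>\<^sup>+x. ennreal (Fs N P (c x)) \<partial>PiM I (\<lambda>_. Exd))"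
  proof (rule nn_integral_cong)
    fix x assume x: "x \<in> space (PiM I (\<lambda>_. Exd))"
    have "(\<integral>\<^sup>+y. indicator A (merge I N (x, y)) \<partial>PiM N (\<lambda>_. Exd))
        = (\<integral>\<^sup>+y. indicator {y \<in> space (PiM N (\<lambda>_. Exd)). c x < S y} y \<partial>PiM N (\<lambda>_. Exd))"
    proof (rule nn_integral_cong)
      fix y assume y: "y \<in> space (PiM N (\<lambda>_. Exd))"
      have sp: "merge I N (x, y) \<in> space (PiM K (\<lambda>_. Exd))"
        using KU by (auto simp: space_PiM)
      have "c (merge I N (x, y)) = c x" unfolding c_def
        by (intro arg_cong2[where f="(*)"] refl arg_cong2[where f="(+)"] sum.cong) (auto simp: merge_def)
      moreover have "S (merge I N (x, y)) = S y" unfolding S_def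
        using IN by (intro sum.cong) (auto simp: merge_def)
      ultimately show "indicator A (merge I N (x, y)) = indicator {y \<in> space (PiM N (\<lambda>_. Exd)). c x < S y} y"
        using sp y by (simp add: A_def split: split_indicator)
    qed
    also have "\<dots> = ennreal (Fs N P (c x))"
      using hypo[OF finN inj PN, of "c x"] by (simp add: S_def)
    finally show "(\<integral>\<^sup>+y. indicator A (merge I N (x, y)) \<partial>PiM N (\<lambda>_. Exd)) = ennreal (Fs N P (c x))" .
  qed
  also have "\<dots> = (\<integral>\<^sup>+x. ennreal (G x) \<partial>PiM I (\<lambda>_. Exd))"
  proof -
    have "AE x in PiM I (\<lambda>_. Exd). ennreal (Fs N P (c x)) = ennreal (G x)" using AEG by (rule AE_mp) auto
    then show ?thesis by (rule nn_integral_cong_AE)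
  qed
  also have "\<dots> = ennreal (integral\<^sup>L (PiM I (\<lambda>_. Exd)) G)"
    by (rule nn_integral_eq_integral[OF intG G0AE])
  finally have emI: "emeasure (PiM K (\<lambda>_. Exd)) A = ennreal (integral\<^sup>L (PiM I (\<lambda>_. Exd)) G)" .
  have "integral\<^sup>L (PiM I (\<lambda>_. Exd)) G
      = (\<Sum>n\<in>N. (coef N P n * exp (- gth * s2 / P n)) *
           (\<integral>x. (\<Prod>k\<in>I. exp (- (gth * P k / P n) * max 0 (x k))) \<partial>PiM I (\<lambda>_. Exd)))"
    unfolding G_def
    by (subst Bochner_Integration.integral_sum[where f="\<lambda>n x. coef N P n * exp (- gth * s2 / P n) * (\<Prod>k\<in>I. exp (- (gth * P k / P n) * max 0 (x k)))"])
       (use intprod in auto)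
  also have "\<dots> = (\<Sum>n\<in>N. exp (- gth * s2 / P n) * coef N P n * (\<Prod>k\<in>I. P n / (P k * gth + P n)))"
  proof (rule sum.cong[OF refl])
    fix n assume n: "n \<in> N"
    have "(\<integral>x. (\<Prod>k\<in>I. (\<lambda>k y. exp (- (gth * P k / P n) * max 0 y)) k (x k)) \<partial>PiM I (\<lambda>_. Exd))
        = (\<Prod>k\<in>I. integral\<^sup>L Exd ((\<lambda>k y. exp (- (gth * P k / P n) * max 0 y)) k))"
      by (rule product_integral_prod[OF finI]) (rule lap(1)[OF lapn[OF n]])
    also have "\<dots> = (\<Prod>k\<in>I. P n / (P k * gth + P n))"
    proof (rule prod.cong[OF refl])
      fix k assume k: "k \<in> I"
      have "integral\<^sup>L Exd ((\<lambda>k y. exp (- (gth * P k / P n) * max 0 y)) k) = 1 / (1 + gth * P k / P n)"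
        using lap(2)[OF lapn[OF n k]] by simp
      also have "\<dots> = P n / (P k * gth + P n)"
        using PN[OF n] PI[OF k] by (simp add: field_simps)
      finally show "integral\<^sup>L Exd ((\<lambda>k y. exp (- (gth * P k / P n) * max 0 y)) k) = P n / (P k * gth + P n)" .
    qed
    finally show "(coef N P n * exp (- gth * s2 / P n)) *
           (\<integral>x. (\<Prod>k\<in>I. exp (- (gth * P k / P n) * max 0 (x k))) \<partial>PiM I (\<lambda>_. Exd))
        = exp (- gth * s2 / P n) * coef N P n * (\<Prod>k\<in>I. P n / (P k * gth + P n))"
      by simp
  qed
  finally have intR: "integral\<^sup>L (PiM I (\<lambda>_. Exd)) G = (\<Sum>n\<in>N. exp (- gth * s2 / P n) * coef N P n * (\<Prod>k\<in>I. P n / (P k * gth + P n)))" .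
  have "0 \<le> integral\<^sup>L (PiM I (\<lambda>_. Exd)) G" by (rule integral_nonneg_AE[OF G0AE])
  then show "0 \<le> (\<Sum>n\<in>N. exp (- gth * s2 / P n) * coef N P n * (\<Prod>k\<in>K-N. P n / (P k * gth + P n)))"
    using intR by (simp add: I_def)
  show "emeasure (PiM K (\<lambda>_. Exd)) {y \<in> space (PiM K (\<lambda>_. Exd)).
            gth * ((\<Sum>k\<in>K-N. P k * y k) + s2) < (\<Sum>n\<in>N. P n * y n)}
     = ennreal (\<Sum>n\<in>N. exp (- gth * s2 / P n) * coef N P n * (\<Prod>k\<in>K-N. P n / (P k * gth + P n)))"
    using emI intR by (simp add: A_def c_def S_def I_def)
qed

lemma cn01_exp:
  assumes "prob_space M" and D: "distributed M lborel h (\<lambda>z. ennreal (cn01_density z))"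
  shows "distributed M lborel (\<lambda>x. (cmod (h x))\<^sup>2) (exponential_density 1)"
proof -
  interpret prob_space M by fact
  have hm[measurable]: "h \<in> borel_measurable M" using distributed_measurable[OF D] by simp
  have Xm: "(\<lambda>x. (cmod (h x))\<^sup>2) \<in> borel_measurable M" by measurable
  have cm: "cn01_density \<in> borel_measurable borel" unfolding cn01_density_def by measurable
  show ?thesis
  proof (rule exponential_distributedI[OF Xm, where l=1])
    fix a :: real assume a: "0 \<le> a"
    have Sm: "{z::complex. a < (cmod z)\<^sup>2} \<in> sets lborel" by measurable
    have "emeasure M {x \<in> space M. a < (cmod (h x))\<^sup>2} = emeasure (distr M lborel h) {z. a < (cmod z)\<^sup>2}"
      by (subst emeasure_distr[OF distributed_measurable[OF D] Sm]) (auto intro!: arg_cong[where f="emeasure M"])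
    also have "\<dots> = emeasure (density lborel (\<lambda>z. ennreal (cn01_density z))) {z. a < (cmod z)\<^sup>2}"
      by (simp add: distributed_distr_eq_density[OF D])
    also have "\<dots> = (\<integral>\<^sup>+z. ennreal (cn01_density z) * indicator {z. a < (cmod z)\<^sup>2} z \<partial>lborel)"
      by (rule emeasure_density) (use cm Sm in auto)
    also have "\<dots> = ennreal (exp (- a))" by (rule cn01_surv[OF a])
    finally have gt: "prob {x \<in> space M. a < (cmod (h x))\<^sup>2} = exp (- a)"
      by (simp add: emeasure_eq_measure)
    have "prob {x \<in> space M. (cmod (h x))\<^sup>2 \<le> a} = prob (space M - {x \<in> space M. a < (cmod (h x))\<^sup>2})"
      by (auto intro!: arg_cong[where f=prob])
    also have "\<dots> = 1 - prob {x \<in> space M. a < (cmod (h x))\<^sup>2}"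
      by (rule prob_compl) measurable
    also have "\<dots> = 1 - exp (- a)" using gt by simp
    finally have "emeasure M {x \<in> space M. (cmod (h x))\<^sup>2 \<le> a} = ennreal (1 - exp (- a))"
      by (simp add: emeasure_eq_measure)
    then show "emeasure M {x \<in> space M. (cmod (h x))\<^sup>2 \<le> a} = 1 - ennreal (exp (- a * 1))"
      by (simp add: ennreal_minus ennreal_1[symmetric] del: ennreal_1)
  qed simp
qed



theorem theorem1:
  fixes M :: "'a measure" and K N :: "'k set" and P :: "'k \<Rightarrow> real"
    and h :: "'k \<Rightarrow> 'a \<Rightarrow> complex" and s2 gth :: real
  assumes "prob_space M"
    and "finite K" and "N \<subseteq> K" and "N \<noteq> {}"
    and "\<And>n. n \<in> K \<Longrightarrow> P n > 0"
    and "inj_on P N"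
    and "prob_space.indep_vars M (\<lambda>_. borel) h K"
    and "\<And>n. n \<in> K \<Longrightarrow> distributed M lborel (h n) (\<lambda>z. ennreal (cn01_density z))"
    and "s2 \<ge> 0"
    and "s2 > 0 \<or> K - N \<noteq> {}"
    and "gth > 0"
  shows "measure M {x \<in> space M. sinr K N P s2 (\<lambda>n. h n x) \<le> gth} =
    1 - (\<Sum>n\<in>N. exp (- gth * s2 / P n)
            * (\<Prod>j\<in>N - {n}. P n / (P n - P j))
            * (\<Prod>k\<in>K - N. P n / (P k * gth + P n)))"
proof -
  interpret prob_space M by fact
  note K = assms(2) and NK = assms(3) and Ne = assms(4) and Ppos = assms(5) and inj = assms(6)
  define R where "R = (\<Sum>n\<in>N. exp (- gth * s2 / P n) * coef N P n * (\<Prod>k\<in>K-N. P n / (P k * gth + P n)))"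
  have R_eq: "R = (\<Sum>n\<in>N. exp (- gth * s2 / P n) * (\<Prod>j\<in>N - {n}. P n / (P n - P j)) * (\<Prod>k\<in>K - N. P n / (P k * gth + P n)))"
    by (simp add: R_def coef_def)
  define X where "X k x = (cmod (h k x))\<^sup>2" for k x
  have hm: "h n \<in> borel_measurable M" if "n \<in> K" for n
    using distributed_measurable[OF assms(8)[OF that]] by simp
  have Xd: "distributed M lborel (X k) (exponential_density 1)" if "k \<in> K" for k
    unfolding X_def using cn01_exp[OF assms(1) assms(8)[OF that]] by simp
  have Xm: "X k \<in> borel_measurable M" if "k \<in> K" for k
    using distributed_measurable[OF Xd[OF that]] by simp
  have XmE: "X k \<in> measurable M Exd" if "k \<in> K" for k
    using Xm[OF that] by (simp add: measurable_cong_sets[OF refl sets_Exd])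
  have Xdistr: "distr M borel (X k) = Exd" if "k \<in> K" for k
  proof -
    have "distr M borel (X k) = distr M lborel (X k)" by (rule distr_cong) simp_all
    also have "\<dots> = Exd" unfolding Exd_def by (rule distributed_distr_eq_density[OF Xd[OF that]])
    finally show ?thesis .
  qed
  have Xeq: "X = (\<lambda>k x. (cmod (h k x))\<^sup>2)" by (simp add: X_def fun_eq_iff)
  have "indep_vars (\<lambda>_. borel) (\<lambda>k x. (cmod (h k x))\<^sup>2) K"
    using indep_vars_compose2[OF assms(7), where Y="\<lambda>k z. (cmod z)\<^sup>2" and N="\<lambda>_. borel"] by simp
  then have indX: "indep_vars (\<lambda>_. borel) X K" by (simp only: Xeq)
  have joint: "distr M (PiM K (\<lambda>_. borel)) (\<lambda>x. \<lambda>k\<in>K. X k x) = PiM K (\<lambda>k. distr M borel (X k))"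
    using indep_vars_iff_distr_eq_PiM'[where I=K and M'="\<lambda>_. borel" and X=X] Ne NK indX Xm by auto
  have jointE: "distr M (PiM K (\<lambda>_. Exd)) (\<lambda>x. \<lambda>k\<in>K. X k x) = PiM K (\<lambda>_. Exd)"
  proof -
    have "distr M (PiM K (\<lambda>_. Exd)) (\<lambda>x. \<lambda>k\<in>K. X k x) = distr M (PiM K (\<lambda>_. borel)) (\<lambda>x. \<lambda>k\<in>K. X k x)"
      by (rule distr_cong) (auto intro!: sets_PiM_cong)
    also have "\<dots> = PiM K (\<lambda>k. distr M borel (X k))" by (rule joint)
    also have "\<dots> = PiM K (\<lambda>_. Exd)" by (rule PiM_cong) (auto simp: Xdistr)
    finally show ?thesis .
  qed
  have Vm: "(\<lambda>x. \<lambda>k\<in>K. X k x) \<in> measurable M (PiM K (\<lambda>_. Exd))"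
    by (rule measurable_restrict) (rule XmE)
  define \<Phi> where "\<Phi> y = (gth * ((\<Sum>k\<in>K-N. P k * y k) + s2) < (\<Sum>n\<in>N. P n * y n))" for y :: "'k \<Rightarrow> real"
  have Bm: "{y \<in> space (PiM K (\<lambda>_. Exd)). \<Phi> y} \<in> sets (PiM K (\<lambda>_. Exd))"
  proof -
    have [measurable]: "(\<lambda>y. \<Sum>k\<in>K-N. P k * y k) \<in> borel_measurable (PiM K (\<lambda>_. Exd))"
      by (rule sum_comp_meas) auto
    have [measurable]: "(\<lambda>y. \<Sum>n\<in>N. P n * y n) \<in> borel_measurable (PiM K (\<lambda>_. Exd))"
      by (rule sum_comp_meas) (rule NK)
    show ?thesis unfolding \<Phi>_def by measurable
  qed
  have pre: "(\<lambda>x. \<lambda>k\<in>K. X k x) -` {y \<in> space (PiM K (\<lambda>_. Exd)). \<Phi> y} \<inter> space M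
      = {x \<in> space M. \<Phi> (\<lambda>k. X k x)}"
  proof -
    have "\<Phi> (\<lambda>k\<in>K. X k x) = \<Phi> (\<lambda>k. X k x)" for x
      unfolding \<Phi>_def using NK
      by (intro arg_cong2[where f="(<)"] arg_cong2[where f="(*)"] arg_cong2[where f="(+)"] refl sum.cong) auto
    then show ?thesis using measurable_space[OF Vm] by auto
  qed
  have Am: "{x \<in> space M. \<Phi> (\<lambda>k. X k x)} \<in> events"
    using measurable_sets[OF Vm Bm] pre by simp
  have QR: "emeasure (PiM K (\<lambda>_. Exd)) {y \<in> space (PiM K (\<lambda>_. Exd)). \<Phi> y} = ennreal R"
    and R0: "0 \<le> R"
    using final_Q[OF K NK inj Ppos assms(9) assms(11)] unfolding R_def \<Phi>_def by auto
  have "emeasure M {x \<in> space M. \<Phi> (\<lambda>k. X k x)} = emeasure (PiM K (\<lambda>_. Exd)) {y \<in> space (PiM K (\<lambda>_. Exd)). \<Phi> y}"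
    by (subst jointE[symmetric], subst emeasure_distr[OF Vm Bm], subst pre) (rule refl)
  then have probA: "prob {x \<in> space M. \<Phi> (\<lambda>k. X k x)} = R"
    using QR R0 by (simp add: emeasure_eq_measure)
  have AEpos: "AE x in M. \<forall>k\<in>K. 0 < X k x"
  proof (rule eventually_ball_finite[OF K], rule ballI)
    fix k assume k: "k \<in> K"
    have "prob {x \<in> space M. X k x \<le> 0} = 1 - exp (- 0 * 1)"
      by (rule exponential_distributedD_le[OF Xd[OF k]]) simp_all
    then have "prob {x \<in> space M. X k x \<le> 0} = 0" by simp
    moreover have "{x \<in> space M. X k x \<le> 0} \<in> events" using Xm[OF k] by measurable
    ultimately have "AE x in M. x \<notin> {x \<in> space M. X k x \<le> 0}" by (simp add: prob_eq_0)
    then show "AE x in M. 0 < X k x" by (rule AE_mp) (auto intro!: AE_I2)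
  qed
  have Sm: "(\<lambda>x. \<Sum>n\<in>N. (cmod (h n x))\<^sup>2 * P n) \<in> borel_measurable M"
  proof (rule borel_measurable_sum)
    fix i assume "i \<in> N"
    then have [measurable]: "h i \<in> borel_measurable M" using hm NK by auto
    show "(\<lambda>x. (cmod (h i x))\<^sup>2 * P i) \<in> borel_measurable M" by measurable
  qed
  have Im: "(\<lambda>x. \<Sum>k\<in>K-N. (cmod (h k x))\<^sup>2 * P k) \<in> borel_measurable M"
  proof (rule borel_measurable_sum)
    fix i assume "i \<in> K - N"
    then have [measurable]: "h i \<in> borel_measurable M" using hm by auto
    show "(\<lambda>x. (cmod (h i x))\<^sup>2 * P i) \<in> borel_measurable M" by measurable
  qed
  have Sinm: "{x \<in> space M. sinr K N P s2 (\<lambda>n. h n x) \<le> gth} \<in> events"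
    unfolding sinr_def using Sm Im by measurable
  have "measure M {x \<in> space M. sinr K N P s2 (\<lambda>n. h n x) \<le> gth}
      = measure M (space M - {x \<in> space M. \<Phi> (\<lambda>k. X k x)})"
  proof (rule finite_measure_eq_AE[OF _ Sinm])
    show "space M - {x \<in> space M. \<Phi> (\<lambda>k. X k x)} \<in> events" using Am by auto
    show "AE x in M. (x \<in> {x \<in> space M. sinr K N P s2 (\<lambda>n. h n x) \<le> gth}) =
        (x \<in> space M - {x \<in> space M. \<Phi> (\<lambda>k. X k x)})"
      using AEpos
    proof (rule AE_mp, intro AE_I2 impI)
      fix x assume x: "x \<in> space M" and pos: "\<forall>k\<in>K. 0 < X k x"
      define D where "D = (\<Sum>k\<in>K-N. (cmod (h k x))\<^sup>2 * P k) + s2"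
      define S where "S = (\<Sum>n\<in>N. (cmod (h n x))\<^sup>2 * P n)"
      have D0: "0 < D"
      proof (cases "K - N = {}")
        case True
        then have "(\<Sum>k\<in>K-N. (cmod (h k x))\<^sup>2 * P k) = 0" by (simp only: sum.empty)
        moreover have "0 < s2" using assms(10) True by simp
        ultimately show ?thesis by (simp add: D_def)
      next
        case False
        have "0 < (\<Sum>k\<in>K-N. (cmod (h k x))\<^sup>2 * P k)"
          using pos Ppos K False by (intro sum_pos) (auto simp: X_def)
        then show ?thesis using assms(9) by (simp add: D_def)
      qed
      have "\<Phi> (\<lambda>k. X k x) = (gth * D < S)"
        unfolding \<Phi>_def D_def S_def X_def by (simp add: mult.commute)
      moreover have "sinr K N P s2 (\<lambda>n. h n x) = S / D"
        by (simp add: sinr_def S_def D_def)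
      moreover have "(S / D \<le> gth) = (\<not> gth * D < S)"
        using D0 by (simp add: pos_divide_le_eq not_less mult.commute)
      ultimately show "(x \<in> {x \<in> space M. sinr K N P s2 (\<lambda>n. h n x) \<le> gth}) =
        (x \<in> space M - {x \<in> space M. \<Phi> (\<lambda>k. X k x)})" using x by simp
    qed
  qed
  also have "\<dots> = 1 - R" using prob_compl[OF Am] probA by simp
  finally show ?thesis by (simp add: R_eq)
qed

end
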